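(* Let $I$ be a nontrivial real interval and let $g\colon I^*\to I$ be a function. The following assertions are equivalent: (i) $g$ is associative (in the sense defined in the context); (ii) $g(\mathbf{x}\,g(\mathbf{y})\,\mathbf{z})=g(\mathbf{x}'\,g(\mathbf{y}')\,\mathbf{z}')$ for all strings $\mathbf{x},\mathbf{y},\mathbf{z},\mathbf{x}',\mathbf{y}',\mathbf{z}'\in I^*$ such that $\mathbf{x}\mathbf{y}\mathbf{z}=\mathbf{x}'\mathbf{y}'\mathbf{z}'$; (iii) $g(\mathbf{x}\,g(\mathbf{y})\,\mathbf{z})=g(\mathbf{x}\mathbf{y}\mathbf{z})$ for all $\mathbf{x},\mathbf{y},\mathbf{z}\in I^*$; (iv) $g(g(\mathbf{x})\,g(\mathbf{y}))=g(\mathbf{x}\mathbf{y})$ for all $\mathbf{x},\mathbf{y}\in I^*$.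
   Context: Tuples in $I^m$ are regarded as strings of length $m$ over $I$; $\varepsilon$ denotes the empty string, $I^0=\{\varepsilon\}$, and $I^*=\bigcup_{m\ge 0}I^m$, endowed with concatenation written by juxtaposition. For $g\colon I^*\to I$, $g_m$ denotes the restriction of $g$ to $I^m$, with the convention $g_0(\varepsilon)=\varepsilon$ (so that a $g(\varepsilon)$ appearing inside a string is the empty string). A binary function $h\colon I^2\to I$ is associative if $h(h(xy)z)=h(x\,h(yz))$ for all $x,y,z\in I$. A function $g\colon I^*\to I$ is called associative if (a) $g_2$ is associative; (b) for every $m>2$ and $x_1,\dots,x_m\in I$, $g_m(x_1\cdots x_m)=g_2(g_2(\cdots g_2(g_2(x_1x_2)x_3)\cdots)x_m)$; and (c) $g_1\circ g=g$ and $g(\mathbf{x}\,g_1(y)\,\mathbf{z})=g(\mathbf{x}y\mathbf{z})$ for all $\mathbf{x},\mathbf{z}\in I^*$, $y\in I$. *)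

theory Defs
  imports "HOL-Analysis.Analysis"
begin

text \<open>A function g : I* -> I is modelled by
  g :: real list => real, constrained on nonempty lists over I; following
  the paper's convention g(epsilon) = epsilon, the value of g as a string
  is given by gstr: the empty string on the empty input and the
  one-letter string [g xs] otherwise.\<close>

definition gstr :: "(real list \<Rightarrow> real) \<Rightarrow> real list \<Rightarrow> real list" where
  "gstr g xs = (if xs = [] then [] else [g xs])"

definition maps_into :: "real set \<Rightarrow> (real list \<Rightarrow> real) \<Rightarrow> bool" where
  "maps_into I g \<longleftrightarrow> (\<forall>xs\<in>lists I. xs \<noteq> [] \<longrightarrow> g xs \<in> I)"

definition assoc_binary :: "real set \<Rightarrow> (real \<Rightarrow> real \<Rightarrow> real) \<Rightarrow> bool" where
  "assoc_binary I h \<longleftrightarrow> (\<forall>x\<in>I. \<forall>y\<in>I. \<forall>z\<in>I. h (h x y) z = h x (h y z))"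

definition associative_fun :: "real set \<Rightarrow> (real list \<Rightarrow> real) \<Rightarrow> bool" where
  "associative_fun I g \<longleftrightarrow>
     assoc_binary I (\<lambda>x y. g [x, y])
   \<and> (\<forall>xs\<in>lists I. length xs > 2 \<longrightarrow> g xs = foldl (\<lambda>a b. g [a, b]) (hd xs) (tl xs))
   \<and> (\<forall>xs\<in>lists I. gstr g (gstr g xs) = gstr g xs)
   \<and> (\<forall>xs\<in>lists I. \<forall>y\<in>I. \<forall>zs\<in>lists I.
        gstr g (xs @ [g [y]] @ zs) = gstr g (xs @ [y] @ zs))"

end

theory Submission
  imports Defs
begin

lemma foldl_assoc:
  assumes A: "assoc_binary I h" and C: "\<And>a b. a\<in>I \<Longrightarrow> b\<in>I \<Longrightarrow> h a b \<in> I"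
  shows "x\<in>I \<Longrightarrow> y\<in>I \<Longrightarrow> zs\<in>lists I \<Longrightarrow> foldl h (h x y) zs = h x (foldl h y zs)"
proof (induction zs arbitrary: y)
  case Nil then show ?case by simp
next
  case (Cons c zs)
  have "h (h x y) c = h x (h y c)" using A Cons.prems unfolding assoc_binary_def by auto
  then show ?case using Cons C by simp
qed

lemma foldl_in:
  assumes C: "\<And>a b. a\<in>I \<Longrightarrow> b\<in>I \<Longrightarrow> h a b \<in> I"
  shows "a\<in>I \<Longrightarrow> zs\<in>lists I \<Longrightarrow> foldl h a zs \<in> I"
  by (induction zs arbitrary: a) (auto simp: C)

definition FF :: "(real \<Rightarrow> real \<Rightarrow> real) \<Rightarrow> real list \<Rightarrow> real" where
  "FF h l = foldl h (hd l) (tl l)"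

lemma FF_in:
  assumes C: "\<And>a b. a\<in>I \<Longrightarrow> b\<in>I \<Longrightarrow> h a b \<in> I"
  shows "l\<in>lists I \<Longrightarrow> l \<noteq> [] \<Longrightarrow> FF h l \<in> I"
  unfolding FF_def by (cases l) (auto intro: foldl_in[OF C])

lemma FF_append:
  assumes A: "assoc_binary I h" and C: "\<And>a b. a\<in>I \<Longrightarrow> b\<in>I \<Longrightarrow> h a b \<in> I"
    and "l1\<in>lists I" "l2\<in>lists I" "l1\<noteq>[]" "l2\<noteq>[]"
  shows "FF h (l1 @ l2) = h (FF h l1) (FF h l2)"
proof -
  obtain a r where l1: "l1 = a#r" using assms by (cases l1) auto
  obtain c s where l2: "l2 = c#s" using assms by (cases l2) auto
  have "FF h (l1 @ l2) = foldl h (h (foldl h a r) c) s" unfolding FF_def l1 l2 by simp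
  also have "\<dots> = h (foldl h a r) (foldl h c s)"
    using assms l1 l2 by (intro foldl_assoc[OF A C]) (auto intro: foldl_in[OF C])
  finally show ?thesis unfolding FF_def l1 l2 by simp
qed

lemma FF_single[simp]: "FF h [a] = a" unfolding FF_def by simp

lemma i_iii:
  assumes M: "maps_into I g" and AF: "associative_fun I g"
    and xs: "xs\<in>lists I" and ys: "ys\<in>lists I" and zs: "zs\<in>lists I"
  shows "gstr g (xs @ gstr g ys @ zs) = gstr g (xs @ ys @ zs)"
proof -
  define h where "h = (\<lambda>a b. g [a, b])"
  have C: "\<And>a b. a\<in>I \<Longrightarrow> b\<in>I \<Longrightarrow> h a b \<in> I" using M unfolding maps_into_def h_def by auto
  have A: "assoc_binary I h" using AF unfolding associative_fun_def h_def by simp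
  have gF: "g l = FF h l" if "l\<in>lists I" "length l \<ge> 2" for l
  proof (cases "length l = 2")
    case True
    then obtain a b where "l = [a,b]"
      by (metis (no_types, lifting) Suc_length_conv length_0_conv numeral_2_eq_2)
    then show ?thesis unfolding FF_def h_def by simp
  next
    case False
    then show ?thesis using AF that unfolding associative_fun_def FF_def h_def by auto
  qed
  show ?thesis
  proof (cases "length ys")
    case 0 then show ?thesis by (simp add: gstr_def)
  next
    case (Suc n)
    show ?thesis
    proof (cases n)
      case 0
      then obtain y where y: "ys = [y]" using Suc by (cases ys) auto
      have "y \<in> I" using ys y by simp
      then show ?thesis using AF xs zs y unfolding associative_fun_def by (simp add: gstr_def)
    next
      case (Suc m)
      have ys2: "length ys \<ge> 2" using \<open>length ys = Suc n\<close> Suc by simp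
      have yne: "ys \<noteq> []" using ys2 by auto
      have gy: "g ys = FF h ys" using gF ys ys2 by simp
      have gyI: "g ys \<in> I" using M ys yne unfolding maps_into_def by auto
      show ?thesis
      proof (cases "xs @ zs = []")
        case True
        have "gstr g (gstr g ys) = gstr g ys" using AF ys unfolding associative_fun_def by blast
        then show ?thesis using True yne by (auto simp: gstr_def)
      next
        case False
        have L1: "length (xs @ [g ys] @ zs) \<ge> 2" using False by (cases xs) (auto simp: Suc_le_eq)
        have L2: "length (xs @ ys @ zs) \<ge> 2" using ys2 by simp
        have "FF h (xs @ [FF h ys] @ zs) = FF h (xs @ ys @ zs)"
        proof (cases "xs = []")
          case True
          then have "zs \<noteq> []" using False by simp
          then show ?thesis using True FF_append[OF A C] ys zs yne gyI gy
            by (metis append_Cons append_Nil FF_single list.distinct(1) lists.Cons lists.Nil)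
        next
          case xne: False
          have FyI: "FF h ys \<in> I" using gy gyI by simp
          show ?thesis
          proof (cases "zs = []")
            case True
            then show ?thesis using FF_append[OF A C] xs ys xne yne FyI
              by (metis append_Nil2 FF_single list.distinct(1) lists.Cons lists.Nil)
          next
            case zne: False
            have s1: "FF h ([FF h ys] @ zs) = h (FF h ys) (FF h zs)"
              using FF_append[OF A C, of "[FF h ys]" zs] FyI zs zne by simp
            have s2: "FF h (ys @ zs) = h (FF h ys) (FF h zs)"
              using FF_append[OF A C, of ys zs] ys zs zne yne by simp
            have "FF h (xs @ ([FF h ys] @ zs)) = h (FF h xs) (FF h ([FF h ys] @ zs))"
              using FF_append[OF A C, of xs "[FF h ys] @ zs"] xs zs FyI xne by simp
            moreover have "FF h (xs @ (ys @ zs)) = h (FF h xs) (FF h (ys @ zs))"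
              using FF_append[OF A C, of xs "ys @ zs"] xs zs ys xne yne by simp
            ultimately show ?thesis using s1 s2 by simp
          qed
        qed
        moreover have "g (xs @ [g ys] @ zs) = FF h (xs @ [g ys] @ zs)"
          using gF L1 xs zs gyI by simp
        moreover have "g (xs @ ys @ zs) = FF h (xs @ ys @ zs)"
          using gF L2 xs zs ys by simp
        ultimately show ?thesis using yne gy by (simp add: gstr_def)
      qed
    qed
  qed
qed

lemma iii_i:
  assumes M: "maps_into I g"
    and H: "\<forall>xs\<in>lists I. \<forall>ys\<in>lists I. \<forall>zs\<in>lists I.
                 gstr g (xs @ gstr g ys @ zs) = gstr g (xs @ ys @ zs)"
  shows "associative_fun I g"
proof -
  have H': "gstr g (xs @ gstr g ys @ zs) = gstr g (xs @ ys @ zs)"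
    if "xs\<in>lists I" "ys\<in>lists I" "zs\<in>lists I" for xs ys zs using H that by blast
  have ass: "assoc_binary I (\<lambda>x y. g [x, y])"
    unfolding assoc_binary_def
  proof (intro ballI)
    fix x y z assume "x\<in>I" "y\<in>I" "z\<in>I"
    then have "gstr g ([] @ gstr g [x,y] @ [z]) = gstr g [x,y,z]"
      and "gstr g ([x] @ gstr g [y,z] @ []) = gstr g [x,y,z]"
      using H'[of "[]" "[x,y]" "[z]"] H'[of "[x]" "[y,z]" "[]"] by auto
    then show "g [g [x, y], z] = g [x, g [y, z]]" by (simp add: gstr_def)
  qed
  have fold: "g (a#ys) = foldl (\<lambda>a b. g [a, b]) a ys"
    if "a \<in> I" "ys \<in> lists I" "ys \<noteq> []" for a ys
    using that
  proof (induction ys rule: rev_induct)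
    case Nil then show ?case by simp
  next
    case (snoc b ys)
    show ?case
    proof (cases "ys = []")
      case True then show ?thesis by simp
    next
      case False
      have "gstr g ([] @ gstr g (a#ys) @ [b]) = gstr g ((a#ys) @ [b])"
        using H'[of "[]" "a#ys" "[b]"] snoc.prems by auto
      then have "g [g (a#ys), b] = g (a#ys@[b])" by (simp add: gstr_def)
      then show ?thesis using snoc False by simp
    qed
  qed
  have b: "\<forall>xs\<in>lists I. length xs > 2 \<longrightarrow> g xs = foldl (\<lambda>a b. g [a, b]) (hd xs) (tl xs)"
  proof (intro ballI impI)
    fix xs :: "real list" assume "xs \<in> lists I" "length xs > 2"
    then show "g xs = foldl (\<lambda>a b. g [a, b]) (hd xs) (tl xs)"
      using fold by (cases xs) (auto simp del: lists.Cons, metis list.size(3) not_less_zero lists.Nil lists.Cons in_listsI Suc_lessD less_numeral_extra(3) gr0I)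
  qed
  have c: "\<forall>xs\<in>lists I. gstr g (gstr g xs) = gstr g xs"
    using H'[of "[]" _ "[]"] by simp
  have d: "\<forall>xs\<in>lists I. \<forall>y\<in>I. \<forall>zs\<in>lists I.
        gstr g (xs @ [g [y]] @ zs) = gstr g (xs @ [y] @ zs)"
    using H'[of _ "[y]" for y] by (simp add: gstr_def)
  show ?thesis unfolding associative_fun_def using ass b c d by blast
qed

lemma gstr_in: "maps_into I g \<Longrightarrow> xs \<in> lists I \<Longrightarrow> gstr g xs \<in> lists I"
  unfolding gstr_def maps_into_def by auto

theorem proposition2p2:
  fixes I :: "real set" and g :: "real list \<Rightarrow> real"
  assumes "is_interval I" and "\<exists>a\<in>I. \<exists>b\<in>I. a \<noteq> b"
    and "maps_into I g"
  shows "(associative_fun I g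
          \<longleftrightarrow> (\<forall>xs\<in>lists I. \<forall>ys\<in>lists I. \<forall>zs\<in>lists I.
               \<forall>xs'\<in>lists I. \<forall>ys'\<in>lists I. \<forall>zs'\<in>lists I.
                 xs @ ys @ zs = xs' @ ys' @ zs' \<longrightarrow>
                 gstr g (xs @ gstr g ys @ zs) = gstr g (xs' @ gstr g ys' @ zs')))
       \<and> (associative_fun I g
          \<longleftrightarrow> (\<forall>xs\<in>lists I. \<forall>ys\<in>lists I. \<forall>zs\<in>lists I.
                 gstr g (xs @ gstr g ys @ zs) = gstr g (xs @ ys @ zs)))
       \<and> (associative_fun I g
          \<longleftrightarrow> (\<forall>xs\<in>lists I. \<forall>ys\<in>lists I.
                 gstr g (gstr g xs @ gstr g ys) = gstr g (xs @ ys)))"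
proof -
  note M = assms(3)
  let ?ii = "\<forall>xs\<in>lists I. \<forall>ys\<in>lists I. \<forall>zs\<in>lists I.
               \<forall>xs'\<in>lists I. \<forall>ys'\<in>lists I. \<forall>zs'\<in>lists I.
                 xs @ ys @ zs = xs' @ ys' @ zs' \<longrightarrow>
                 gstr g (xs @ gstr g ys @ zs) = gstr g (xs' @ gstr g ys' @ zs')"
  let ?iii = "\<forall>xs\<in>lists I. \<forall>ys\<in>lists I. \<forall>zs\<in>lists I.
                 gstr g (xs @ gstr g ys @ zs) = gstr g (xs @ ys @ zs)"
  let ?iv = "\<forall>xs\<in>lists I. \<forall>ys\<in>lists I.
                 gstr g (gstr g xs @ gstr g ys) = gstr g (xs @ ys)"
  have e1: "associative_fun I g \<longleftrightarrow> ?iii" using i_iii[OF M] iii_i[OF M] by blast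
  have e2: "?iii \<longleftrightarrow> ?ii"
  proof
    assume H: ?iii
    show ?ii
    proof (intro ballI impI)
      fix xs ys zs xs' ys' zs' assume "xs\<in>lists I" "ys\<in>lists I" "zs\<in>lists I"
        "xs'\<in>lists I" "ys'\<in>lists I" "zs'\<in>lists I" and E: "xs @ ys @ zs = xs' @ ys' @ zs'"
      then show "gstr g (xs @ gstr g ys @ zs) = gstr g (xs' @ gstr g ys' @ zs')"
        using H by (metis E)
    qed
  next
    assume H: ?ii
    show ?iii
    proof (intro ballI)
      fix xs ys zs assume "xs\<in>lists I" "ys\<in>lists I" "zs\<in>lists I"
      then show "gstr g (xs @ gstr g ys @ zs) = gstr g (xs @ ys @ zs)"
        using H[rule_format, of xs ys zs "xs@ys" "[]" zs] by (simp add: gstr_def)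
    qed
  qed
  have e3: "?iii \<longleftrightarrow> ?iv"
  proof
    assume H: ?iii
    show ?iv
    proof (intro ballI)
      fix xs ys assume xs: "xs\<in>lists I" and ys: "ys\<in>lists I"
      have "gstr g (gstr g xs @ gstr g ys @ []) = gstr g (gstr g xs @ ys @ [])"
        using H gstr_in[OF M xs] ys by blast
      moreover have "gstr g ([] @ gstr g xs @ ys) = gstr g ([] @ xs @ ys)"
        using H xs ys by blast
      ultimately show "gstr g (gstr g xs @ gstr g ys) = gstr g (xs @ ys)" by simp
    qed
  next
    assume H: ?iv
    have GG: "gstr g (gstr g x) = gstr g x" if "x \<in> lists I" for x
      using H[rule_format, OF that, of "[]"] by (simp add: gstr_def)
    show ?iii
    proof (intro ballI)
      fix xs ys zs assume xs: "xs\<in>lists I" and ys: "ys\<in>lists I" and zs: "zs\<in>lists I"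
      have Gy: "gstr g ys \<in> lists I" using gstr_in[OF M ys] .
      have a: "gstr g (gstr g ys @ zs) = gstr g (ys @ zs)"
        using H[rule_format, OF Gy zs] GG[OF ys] H[rule_format, OF ys zs] by simp
      have "gstr g (xs @ (gstr g ys @ zs)) = gstr g (gstr g xs @ gstr g (gstr g ys @ zs))"
        using H[rule_format, OF xs, of "gstr g ys @ zs"] Gy zs by simp
      also have "\<dots> = gstr g (xs @ ys @ zs)"
        using a H[rule_format, OF xs, of "ys @ zs"] ys zs by simp
      finally show "gstr g (xs @ gstr g ys @ zs) = gstr g (xs @ ys @ zs)" .
    qed
  qed
  show ?thesis using e1 e2 e3 by blast
qed

end
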